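(* Under the standing setting and Assumptions (A1), (A2), (A3) described in the context, for every $T>0$, $$\lim_{\epsilon\to 0}\ \sup_{0\le t\le T}|X(t)-\bar X^{\rm c}(t)|=0\quad\text{almost surely.}$$
   Context: Setting. Let $(\Omega,\mathcal F,P)$ be a complete probability space, $\epsilon_0>0$ fixed and $\epsilon\in(0,\epsilon_0)$ a small parameter. Consider the discrete-time system $$X_{k+1}=X_k+\epsilon f(X_k,Y_{k+1}),\quad k=0,1,2,\dots,\qquad X_0=x\in\mathbb R^n \text{ (deterministic)},$$ where $\{Y_k\}$ is an $\mathbb R^m$-valued stochastic sequence with state space $S_Y\subset\mathbb R^m$, and $f:\mathbb R^n\times\mathbb R^m\to\mathbb R^n$. (A1) $f(x,y)$ is continuous in $(x,y)$; for each $x$, $y\mapsto f(x,y)$ is bounded; and $f$ is locally Lipschitz in $x$ uniformly in $y$: for every compact $D\subset\mathbb R^n$ there is $k_D$ with $|f(x_1,y)-f(x_2,y)|\le k_D|x_1-x_2|$ for all $x_1,x_2\in D$, $y\in S_Y$. (A2) $\{Y_k\}$ is ergodic with invariant distribution $\mu$, in the sense that for each $x$, $\bar f(x):=\int_{S_Y}f(x,y)\mu(dy)=\lim_{N\to\infty}\frac1{N+1}\sum_{k=0}^N f(x,Y_{k+1})$ almost surely. Average systems: the discrete average system $\bar X^{\rm d}_{k+1}=\bar X^{\rm d}_k+\epsilon\bar f(\bar X^{\rm d}_k)$, and the continuous average system $\frac{d}{dt}\bar X^{\rm c}(t)=\bar f(\bar X^{\rm c}(t))$, both with initial value $\bar X^{\rm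 d}_0=\bar X^{\rm c}(0)=X_0=x$. (A3) The continuous average system has a solution on $[0,\infty)$. Continuous-time versions: with $t_k=\epsilon k$, define the piecewise constant processes $X(t)=X_k$ and $\bar X^{\rm d}(t)=\bar X^{\rm d}_k$ for $t_k\le t<t_{k+1}$ (these depend on $\epsilon$). *)

theory Defs
  imports "HOL-Probability.Probability"
begin

fun Xseq :: "('n::real_normed_vector \<Rightarrow> 'm \<Rightarrow> 'n) \<Rightarrow> (nat \<Rightarrow> 'w \<Rightarrow> 'm)
             \<Rightarrow> 'n \<Rightarrow> real \<Rightarrow> 'w \<Rightarrow> nat \<Rightarrow> 'n" where
  "Xseq f Y x eps \<omega> 0 = x"
| "Xseq f Y x eps \<omega> (Suc k) =
     Xseq f Y x eps \<omega> k + eps *\<^sub>R f (Xseq f Y x eps \<omega> k) (Y (Suc k) \<omega>)"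

definition Xpc :: "('n::real_normed_vector \<Rightarrow> 'm \<Rightarrow> 'n) \<Rightarrow> (nat \<Rightarrow> 'w \<Rightarrow> 'm)
             \<Rightarrow> 'n \<Rightarrow> real \<Rightarrow> 'w \<Rightarrow> real \<Rightarrow> 'n" where
  "Xpc f Y x eps \<omega> t = Xseq f Y x eps \<omega> (nat \<lfloor>t / eps\<rfloor>)"

end

theory Submission
  imports Defs
begin


lemma ces:
  fixes g :: "nat \<Rightarrow> 'n::real_normed_vector"
  assumes lim: "(\<lambda>N. (1 / real (N + 1)) *\<^sub>R (\<Sum>k\<le>N. g k)) \<longlonglongrightarrow> c"
    and T: "T > 0" and eta: "\<eta> > 0"
  shows "\<exists>e0>0. \<forall>eps. 0 < eps \<and> eps < e0 \<longrightarrow> (\<forall>N. real N * eps \<le> T \<longrightarrow> norm (eps *\<^sub>R (\<Sum>i<N. g i - c)) \<le> \<eta>)"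
proof -
  define s where "s N = (\<Sum>i<N. g i - c)" for N
  have eq: "(1 / real (N + 1)) *\<^sub>R (\<Sum>k\<le>N. g k) - c = (1 / real (N + 1)) *\<^sub>R s (Suc N)" for N
  proof -
    have "s (Suc N) = (\<Sum>k\<le>N. g k) - real (N + 1) *\<^sub>R c"
      unfolding s_def by (simp add: sum_subtractf lessThan_Suc_atMost sum_constant_scaleR)
    then show ?thesis by (simp add: scaleR_diff_right)
  qed
  have "(\<lambda>N. (1 / real (N + 1)) *\<^sub>R (\<Sum>k\<le>N. g k) - c) \<longlonglongrightarrow> 0"
    using lim by (simp add: LIM_zero)
  then have "(\<lambda>N. (1 / real (N + 1)) *\<^sub>R s (Suc N)) \<longlonglongrightarrow> 0" unfolding eq .
  then obtain N0 where N0: "\<And>N. N \<ge> N0 \<Longrightarrow> norm ((1 / real (N + 1)) *\<^sub>R s (Suc N)) < \<eta> / (2 * T)"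
  proof -
    have "\<eta> / (2 * T) > 0" using T eta by simp
    from LIMSEQ_D[OF \<open>(\<lambda>N. (1 / real (N + 1)) *\<^sub>R s (Suc N)) \<longlonglongrightarrow> 0\<close> this]
    obtain no where "\<forall>n\<ge>no. norm ((1 / real (n + 1)) *\<^sub>R s (Suc n) - 0) < \<eta> / (2 * T)" by blast
    then show ?thesis using that by auto
  qed
  have big: "norm (s n) \<le> real n * (\<eta> / (2 * T))" if nN: "n > N0" for n
  proof -
    obtain N where n: "n = Suc N" and "N \<ge> N0" using nN by (cases n) auto
    then have "norm ((1 / real (N + 1)) *\<^sub>R s (Suc N)) < \<eta> / (2 * T)" using N0 by auto
    then have "norm (s (Suc N)) / real (N + 1) < \<eta> / (2 * T)" by simp
    then show ?thesis unfolding n by (simp add: field_simps)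
  qed
  define C where "C = (\<Sum>n\<le>N0. norm (s n))"
  have small: "norm (s n) \<le> C" if "n \<le> N0" for n
    unfolding C_def using that by (intro member_le_sum) auto
  have C0: "C \<ge> 0" unfolding C_def by (simp add: sum_nonneg)
  define e0 where "e0 = \<eta> / (2 * (C + 1))"
  have e0: "e0 > 0" using eta C0 by (simp add: e0_def)
  show ?thesis
  proof (intro exI[of _ e0] conjI allI impI e0)
    fix eps N assume ep: "0 < eps \<and> eps < e0" and NT: "real N * eps \<le> T"
    have "norm (eps *\<^sub>R s N) \<le> \<eta> / 2"
    proof (cases "N \<le> N0")
      case True
      have "norm (eps *\<^sub>R s N) = eps * norm (s N)" using ep by simp
      also have "\<dots> \<le> e0 * (C + 1)" using ep small[OF True] C0
        by (intro mult_mono) auto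
      also have "\<dots> = \<eta> / 2" using C0 by (simp add: e0_def field_simps)
      finally show ?thesis .
    next
      case False
      have "norm (eps *\<^sub>R s N) = eps * norm (s N)" using ep by simp
      also have "\<dots> \<le> eps * (real N * (\<eta> / (2 * T)))" using ep big[of N] False
        by (intro mult_left_mono) auto
      also have "\<dots> = (real N * eps) * (\<eta> / (2 * T))" by simp
      also have "\<dots> \<le> T * (\<eta> / (2 * T))" using NT eta T by (intro mult_right_mono) auto
      also have "\<dots> = \<eta> / 2" using T by simp
      finally show ?thesis .
    qed
    then show "norm (eps *\<^sub>R (\<Sum>i<N. g i - c)) \<le> \<eta>" using eta unfolding s_def by simp
  qed
qed



lemma downclosed_sum:
  fixes v :: "nat \<Rightarrow> 'a::comm_monoid_add"
  assumes dc: "\<And>i i'. i' \<le> i \<Longrightarrow> P i \<Longrightarrow> P i'"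
  shows "\<exists>N\<le>k. (\<Sum>i<k. if P i then v i else 0) = (\<Sum>i<N. v i)"
proof (induction k)
  case 0 then show ?case by simp
next
  case (Suc k)
  then obtain N where N: "N \<le> k" "(\<Sum>i<k. if P i then v i else 0) = (\<Sum>i<N. v i)" by blast
  show ?case
  proof (cases "P k")
    case True
    then have "\<And>i. i < k \<Longrightarrow> P i" using dc by (meson less_imp_le)
    then have "(\<Sum>i<Suc k. if P i then v i else 0) = (\<Sum>i<Suc k. v i)"
      using True by (intro sum.cong) (auto simp: less_Suc_eq)
    then show ?thesis by blast
  next
    case False
    then have "(\<Sum>i<Suc k. if P i then v i else 0) = (\<Sum>i<N. v i)" using N by simp
    then show ?thesis using N by (intro exI[of _ N]) auto
  qed
qed



lemma int_bound:
  fixes g :: "'a \<Rightarrow> 'b::{banach,second_countable_topology}"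
  assumes P: "prob_space M" and ig: "integrable M g" and AE: "AE y in M. norm (g y) \<le> c"
  shows "norm (integral\<^sup>L M g) \<le> c"
proof -
  interpret prob_space M by (rule P)
  have "norm (integral\<^sup>L M g) \<le> integral\<^sup>L M (\<lambda>y. norm (g y))" by (rule integral_norm_bound)
  also have "\<dots> \<le> integral\<^sup>L M (\<lambda>y. c)"
    using ig AE by (intro integral_mono_AE integrable_norm) auto
  also have "\<dots> = c" by (simp add: prob_space)
  finally show ?thesis .
qed

lemma fbar_props:
  fixes f :: "'n::euclidean_space \<Rightarrow> 'm::euclidean_space \<Rightarrow> 'n"
  assumes mu_prob: "prob_space \<mu>"
    and mu_sets: "sets \<mu> = sets borel"
    and SY_meas: "SY \<in> sets \<mu>"
    and mu_SY: "emeasure \<mu> SY = 1"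
    and fbar_def: "\<And>x. fbar x = (LINT y:SY|\<mu>. f x y)"
    and A1_cont: "continuous_on UNIV (\<lambda>(x, y). f x y)"
    and A1_bdd: "\<And>x. bounded (range (f x))"
  shows "\<And>a c. (\<And>y. y \<in> SY \<Longrightarrow> norm (f a y) \<le> c) \<Longrightarrow> norm (fbar a) \<le> c"
    and "\<And>a b c. (\<And>y. y \<in> SY \<Longrightarrow> norm (f a y - f b y) \<le> c) \<Longrightarrow> norm (fbar a - fbar b) \<le> c"
proof -
  interpret prob_space \<mu> by (rule mu_prob)
  have aeSY: "AE y in \<mu>. y \<in> SY"
    using mu_SY SY_meas by (intro AE_prob_1) (simp add: emeasure_eq_measure)
  have meas: "f a \<in> borel_measurable \<mu>" for a
  proof -
    have c1: "continuous_on UNIV (\<lambda>y::'m. (a, y))" by (intro continuous_on_Pair continuous_on_const continuous_on_id)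
    have "continuous_on UNIV ((\<lambda>(x, y). f x y) \<circ> (\<lambda>y. (a, y)))"
      by (rule continuous_on_compose[OF c1 continuous_on_subset[OF A1_cont]]) simp
    then have "continuous_on UNIV (f a)" by (simp add: o_def)
    then have "f a \<in> borel_measurable borel" by (rule borel_measurable_continuous_onI)
    then show ?thesis by (subst measurable_cong_sets[OF mu_sets refl])
  qed
  have int: "integrable \<mu> (f a)" for a
  proof -
    obtain c where c: "\<forall>y\<in>range (f a). norm y \<le> c" using A1_bdd[of a] unfolding bounded_iff by blast
    then have "\<forall>y. norm (f a y) \<le> c" by simp
    then have "AE y in \<mu>. norm (f a y) \<le> c" by simp
    then show ?thesis by (rule integrable_const_bound[OF _ meas])
  qed
  have fb: "fbar a = integral\<^sup>L \<mu> (f a)" for a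
  proof -
    have m1: "(\<lambda>y. indicator SY y *\<^sub>R f a y) \<in> borel_measurable \<mu>"
      by (intro borel_measurable_scaleR borel_measurable_indicator SY_meas meas)
    have "AE y in \<mu>. indicator SY y *\<^sub>R f a y = f a y"
      using aeSY by (rule eventually_mono) simp
    then show ?thesis unfolding fbar_def set_lebesgue_integral_def by (rule integral_cong_AE[OF m1 meas])
  qed
  show "norm (fbar a) \<le> c" if h: "\<And>y. y \<in> SY \<Longrightarrow> norm (f a y) \<le> c" for a c
  proof -
    have "AE y in \<mu>. norm (f a y) \<le> c" using aeSY by (rule eventually_mono) (rule h)
    then show ?thesis unfolding fb by (rule int_bound[OF mu_prob int])
  qed
  show "norm (fbar a - fbar b) \<le> c" if h: "\<And>y. y \<in> SY \<Longrightarrow> norm (f a y - f b y) \<le> c" for a b c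
  proof -
    have "fbar a - fbar b = integral\<^sup>L \<mu> (\<lambda>y. f a y - f b y)" unfolding fb
      by (rule Bochner_Integration.integral_diff[OF int int, symmetric])
    moreover have "AE y in \<mu>. norm (f a y - f b y) \<le> c" using aeSY by (rule eventually_mono) (rule h)
    ultimately show ?thesis using int_bound[OF mu_prob Bochner_Integration.integrable_diff[OF int int]] by simp
  qed
qed



locale avg =
  fixes f :: "'n::euclidean_space \<Rightarrow> 'm \<Rightarrow> 'n" and fbar :: "'n \<Rightarrow> 'n" and Xc :: "real \<Rightarrow> 'n"
    and SY :: "'m set" and D :: "'n set" and T L B :: real and x :: 'n
  assumes T_pos: "T > 0" and L_pos: "L > 0" and B_pos: "B > 0"
    and lipf: "\<And>a b y. a \<in> D \<Longrightarrow> b \<in> D \<Longrightarrow> y \<in> SY \<Longrightarrow> norm (f a y - f b y) \<le> L * norm (a - b)"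
    and lipfbar: "\<And>a b. a \<in> D \<Longrightarrow> b \<in> D \<Longrightarrow> norm (fbar a - fbar b) \<le> L * norm (a - b)"
    and bfbar: "\<And>a. a \<in> D \<Longrightarrow> norm (fbar a) \<le> B"
    and nbhd: "\<And>s. 0 \<le> s \<Longrightarrow> s \<le> T \<Longrightarrow> cball (Xc s) 1 \<subseteq> D"
    and ode: "\<And>t. 0 \<le> t \<Longrightarrow> (Xc has_vector_derivative fbar (Xc t)) (at t within {0..})"
    and Xc0: "Xc 0 = x"
begin

lemma XcD: "0 \<le> s \<Longrightarrow> s \<le> T \<Longrightarrow> Xc s \<in> D"
  using nbhd[of s] by auto

lemma Xc_lin_gen:
  assumes "0 \<le> a" "a \<le> b" "b \<le> T" and C: "\<And>s. a \<le> s \<Longrightarrow> s \<le> b \<Longrightarrow> norm (fbar (Xc s) - fbar (Xc a)) \<le> C"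
  shows "norm (Xc b - Xc a - (b - a) *\<^sub>R fbar (Xc a)) \<le> (b - a) * C"
proof -
  have "norm (Xc b - Xc a - (b - a) *\<^sub>R fbar (Xc a)) \<le> norm (b - a) * C"
  proof (rule vector_differentiable_bound_linearization[where S="{a..b}" and f'="\<lambda>s. fbar (Xc s)"])
    fix s assume s: "s \<in> {a..b}"
    show "(Xc has_vector_derivative fbar (Xc s)) (at s within {a..b})"
      using ode[of s] s assms by (auto intro: has_vector_derivative_within_subset)
  next
    show "closed_segment a b \<subseteq> {a..b}" using assms by (simp add: closed_segment_eq_real_ivl)
  next
    fix s assume "s \<in> {a..b}" then show "norm (fbar (Xc s) - fbar (Xc a)) \<le> C" using C by auto
  next
    show "a \<in> {a..b}" using assms by auto
  qed
  then show ?thesis using assms by simp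
qed

lemma Xc_lip_aux:
  assumes "0 \<le> a" "a \<le> b" "b \<le> T"
  shows "norm (Xc b - Xc a) \<le> 3 * B * (b - a)"
proof -
  have "norm (Xc b - Xc a - (b - a) *\<^sub>R fbar (Xc a)) \<le> (b - a) * (2 * B)"
  proof (rule Xc_lin_gen[OF assms])
    fix s assume "a \<le> s" "s \<le> b"
    then have "norm (fbar (Xc s)) \<le> B" "norm (fbar (Xc a)) \<le> B" using assms by (auto intro!: bfbar XcD)
    then show "norm (fbar (Xc s) - fbar (Xc a)) \<le> 2 * B" using norm_triangle_ineq4[of "fbar (Xc s)" "fbar (Xc a)"] by linarith
  qed
  moreover have "norm ((b - a) *\<^sub>R fbar (Xc a)) \<le> (b - a) * B"
    using assms bfbar[OF XcD[of a]] by (simp add: mult_left_mono)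
  ultimately show ?thesis using norm_triangle_ineq[of "Xc b - Xc a - (b - a) *\<^sub>R fbar (Xc a)" "(b - a) *\<^sub>R fbar (Xc a)"]
    by (simp add: algebra_simps)
qed

lemma Xc_lip:
  assumes "0 \<le> a" "a \<le> T" "0 \<le> b" "b \<le> T"
  shows "norm (Xc b - Xc a) \<le> 3 * B * \<bar>b - a\<bar>"
proof (cases "a \<le> b")
  case True then show ?thesis using Xc_lip_aux[of a b] assms by simp
next
  case False then show ?thesis using Xc_lip_aux[of b a] assms by (simp add: norm_minus_commute)
qed

lemma Xc_lin:
  assumes "0 \<le> a" "a \<le> b" "b \<le> T"
  shows "norm (Xc b - Xc a - (b - a) *\<^sub>R fbar (Xc a)) \<le> (b - a) * (L * (3 * B * (b - a)))"
proof (rule Xc_lin_gen[OF assms])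
  fix s assume s: "a \<le> s" "s \<le> b"
  have "norm (fbar (Xc s) - fbar (Xc a)) \<le> L * norm (Xc s - Xc a)"
    using s assms by (intro lipfbar XcD) auto
  also have "\<dots> \<le> L * (3 * B * \<bar>s - a\<bar>)"
    using Xc_lip[of a s] s assms L_pos by (intro mult_left_mono) auto
  also have "\<dots> \<le> L * (3 * B * (b - a))"
    using s B_pos L_pos by (intro mult_left_mono) auto
  finally show "norm (fbar (Xc s) - fbar (Xc a)) \<le> L * (3 * B * (b - a))" .
qed

end


context avg begin

lemma lip_h:
  assumes "a \<in> D" "b \<in> D" "y \<in> SY"
  shows "norm ((f a y - fbar a) - (f b y - fbar b)) \<le> 2 * L * norm (a - b)"
proof -
  have "norm ((f a y - fbar a) - (f b y - fbar b)) \<le> norm (f a y - f b y) + norm (fbar a - fbar b)"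
  proof -
    have eq: "(f a y - fbar a) - (f b y - fbar b) = (f a y - f b y) - (fbar a - fbar b)" by (simp add: algebra_simps)
    show ?thesis unfolding eq by (rule norm_triangle_ineq4)
  qed
  also have "\<dots> \<le> L * norm (a - b) + L * norm (a - b)" using lipf lipfbar assms by (intro add_mono) auto
  finally show ?thesis by simp
qed

lemma averaging:
  fixes y :: "nat \<Rightarrow> 'm"
  assumes ySY: "\<And>i. y i \<in> SY"
    and erg: "\<And>p j. 0 < p \<Longrightarrow> j < p \<Longrightarrow>
      (\<lambda>N. (1 / real (N + 1)) *\<^sub>R (\<Sum>k\<le>N. f (Xc (real j * T / real p)) (y k))) \<longlonglongrightarrow> fbar (Xc (real j * T / real p))"
    and dpos: "\<delta> > 0"
  shows "\<exists>e0>0. \<forall>eps. 0 < eps \<and> eps < e0 \<longrightarrow> (\<forall>k. real k * eps \<le> T \<longrightarrow>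
           norm (eps *\<^sub>R (\<Sum>i<k. f (Xc (real i * eps)) (y i) - fbar (Xc (real i * eps)))) \<le> \<delta>)"
proof -
  define p :: nat where "p = nat \<lceil>12 * L * B * T^2 / \<delta>\<rceil> + 1"
  have p0: "p > 0" unfolding p_def by simp
  have pbig: "12 * L * B * T^2 / \<delta> \<le> real p" unfolding p_def by linarith
  define \<Delta> where "\<Delta> = T / real p"
  have \<Delta>0: "\<Delta> > 0" using T_pos p0 by (simp add: \<Delta>_def)
  have errD: "T * (6 * L * B * \<Delta>) \<le> \<delta> / 2"
  proof -
    have "12 * L * B * T^2 \<le> real p * \<delta>" using pbig dpos by (simp add: field_simps)
    then show ?thesis using p0 dpos by (simp add: \<Delta>_def field_simps power2_eq_square)
  qed
  define xj where "xj j = Xc (real j * T / real p)" for j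
  define v where "v j i = f (xj j) (y i) - fbar (xj j)" for j i
  have "\<forall>j. \<exists>e. j < p \<longrightarrow> e > 0 \<and> (\<forall>eps. 0 < eps \<and> eps < e \<longrightarrow>
        (\<forall>N. real N * eps \<le> T \<longrightarrow> norm (eps *\<^sub>R (\<Sum>i<N. v j i)) \<le> \<delta> / (4 * real p)))"
  proof
    fix j
    show "\<exists>e. j < p \<longrightarrow> e > 0 \<and> (\<forall>eps. 0 < eps \<and> eps < e \<longrightarrow>
        (\<forall>N. real N * eps \<le> T \<longrightarrow> norm (eps *\<^sub>R (\<Sum>i<N. v j i)) \<le> \<delta> / (4 * real p)))"
    proof (cases "j < p")
      case True
      have "\<delta> / (4 * real p) > 0" using dpos p0 by simp
      from ces[OF erg[OF p0 True] T_pos this] show ?thesis unfolding v_def xj_def by blast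
    qed auto
  qed
  then obtain e where e: "\<And>j. j < p \<Longrightarrow> e j > 0 \<and> (\<forall>eps. 0 < eps \<and> eps < e j \<longrightarrow>
        (\<forall>N. real N * eps \<le> T \<longrightarrow> norm (eps *\<^sub>R (\<Sum>i<N. v j i)) \<le> \<delta> / (4 * real p)))"
    by metis
  define e0 where "e0 = Min (e ` {..<p})"
  have e0pos: "e0 > 0" unfolding e0_def using p0 e by (subst Min_gr_iff) auto
  have e0le: "e0 \<le> e j" if "j < p" for j unfolding e0_def using that by (intro Min_le) auto
  show ?thesis
  proof (intro exI[of _ e0] conjI e0pos allI impI)
    fix eps k assume ep: "0 < eps \<and> eps < e0" and kT: "real k * eps \<le> T"
    define J where "J i = nat \<lfloor>real i * eps / \<Delta>\<rfloor>" for i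
    have Jmono: "J i' \<le> J i" if "i' \<le> i" for i i'
      unfolding J_def using that ep \<Delta>0
      by (intro nat_mono floor_mono divide_right_mono mult_right_mono) auto
    have Jprops: "J i < p \<and> real (J i) * \<Delta> \<le> real i * eps \<and> real i * eps - real (J i) * \<Delta> \<le> \<Delta>" if "i < k" for i
    proof -
      define r where "r = real i * eps / \<Delta>"
      have r0: "r \<ge> 0" using ep \<Delta>0 by (simp add: r_def)
      have JI: "real (J i) = of_int \<lfloor>r\<rfloor>" unfolding J_def r_def[symmetric] using r0 by simp
      have "real i * eps < real k * eps" using that ep by simp
      then have "real i * eps < T" using kT by simp
      then have "r < real p" using p0 \<Delta>0 by (simp add: r_def \<Delta>_def field_simps)
      then have "J i < p" using JI r0 by linarith
      moreover have "real (J i) \<le> r" "r < real (J i) + 1" using JI by linarith+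
      then have "real (J i) * \<Delta> \<le> real i * eps" "real i * eps < (real (J i) + 1) * \<Delta>"
        using \<Delta>0 by (simp_all add: r_def field_simps)
      ultimately show ?thesis by (simp add: algebra_simps)
    qed
    define w where "w i = f (Xc (real i * eps)) (y i) - fbar (Xc (real i * eps))" for i
    define u where "u i = v (J i) i" for i
    have xjJ: "xj (J i) = Xc (real (J i) * \<Delta>)" for i unfolding xj_def \<Delta>_def by simp
    have wu: "norm (w i - u i) \<le> 6 * L * B * \<Delta>" if "i < k" for i
    proof -
      have "real i * eps \<le> real k * eps" using that ep by (intro mult_right_mono) auto
      then have iT: "real i * eps \<le> T" using kT by linarith
      have a: "0 \<le> real (J i) * \<Delta>" "real (J i) * \<Delta> \<le> T" "0 \<le> real i * eps" "real i * eps \<le> T"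
        using Jprops[OF that] \<Delta>0 ep iT by auto
      have "norm (w i - u i) \<le> 2 * L * norm (Xc (real i * eps) - Xc (real (J i) * \<Delta>))"
        unfolding w_def u_def v_def xjJ using a by (intro lip_h XcD ySY) auto
      also have "\<dots> \<le> 2 * L * (3 * B * \<bar>real i * eps - real (J i) * \<Delta>\<bar>)"
        using Xc_lip[of "real (J i) * \<Delta>" "real i * eps"] a L_pos by (intro mult_left_mono) auto
      also have "\<dots> \<le> 2 * L * (3 * B * \<Delta>)"
        using Jprops[OF that] L_pos B_pos by (intro mult_left_mono) auto
      finally show ?thesis by simp
    qed
    have part1: "norm (eps *\<^sub>R (\<Sum>i<k. w i - u i)) \<le> \<delta> / 2"
    proof -
      have "norm (eps *\<^sub>R (\<Sum>i<k. w i - u i)) = eps * norm (\<Sum>i<k. w i - u i)" using ep by simp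
      also have "\<dots> \<le> eps * (\<Sum>i<k. 6 * L * B * \<Delta>)"
        using ep wu by (intro mult_left_mono order_trans[OF norm_sum sum_mono]) auto
      also have "\<dots> = (real k * eps) * (6 * L * B * \<Delta>)" by simp
      also have "\<dots> \<le> T * (6 * L * B * \<Delta>)" using kT L_pos B_pos \<Delta>0 by (intro mult_right_mono) auto
      finally show ?thesis using errD by simp
    qed
    have swap: "(\<Sum>i<k. u i) = (\<Sum>j<p. \<Sum>i<k. if J i = j then v j i else 0)"
    proof -
      have "(\<Sum>i<k. u i) = (\<Sum>i<k. \<Sum>j<p. if J i = j then v j i else 0)"
        unfolding u_def using Jprops by (intro sum.cong) (auto simp: sum.delta')
      also have "\<dots> = (\<Sum>j<p. \<Sum>i<k. if J i = j then v j i else 0)" by (rule sum.swap)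
      finally show ?thesis .
    qed
    have perj: "norm (eps *\<^sub>R (\<Sum>i<k. if J i = j then v j i else 0)) \<le> \<delta> / (2 * real p)" if jp: "j < p" for j
    proof -
      have bnd: "norm (eps *\<^sub>R (\<Sum>i<k. if J i < m then v j i else 0)) \<le> \<delta> / (4 * real p)" for m
      proof -
        have dc: "\<And>i i'. i' \<le> i \<Longrightarrow> J i < m \<Longrightarrow> J i' < m"
          using Jmono le_less_trans by blast
        have ex: "\<exists>N\<le>k. (\<Sum>i<k. if J i < m then v j i else 0) = (\<Sum>i<N. v j i)"
          using downclosed_sum[where P="\<lambda>i. J i < m" and k=k and v="v j", OF dc] .
        obtain N where N: "N \<le> k" "(\<Sum>i<k. if J i < m then v j i else 0) = (\<Sum>i<N. v j i)"
          using ex by metis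
        have "real N * eps \<le> real k * eps" using N(1) ep by (intro mult_right_mono) auto
        then have NT: "real N * eps \<le> T" using kT by linarith
        have epj: "0 < eps \<and> eps < e j" using ep e0le[OF jp] by linarith
        have "norm (eps *\<^sub>R (\<Sum>i<N. v j i)) \<le> \<delta> / (4 * real p)"
          using conjunct2[OF e[OF jp]] epj NT by blast
        then show ?thesis unfolding N(2) .
      qed
      define SA where "SA = (\<Sum>i<k. if J i < Suc j then v j i else 0)"
      define SB where "SB = (\<Sum>i<k. if J i < j then v j i else 0)"
      have "(\<Sum>i<k. if J i = j then v j i else 0) =
            (\<Sum>i<k. (if J i < Suc j then v j i else 0) - (if J i < j then v j i else 0))"
        by (rule sum.cong) auto
      also have "\<dots> = SA - SB" unfolding SA_def SB_def by (rule sum_subtractf)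
      finally have eq: "eps *\<^sub>R (\<Sum>i<k. if J i = j then v j i else 0) = eps *\<^sub>R SA - eps *\<^sub>R SB"
        by (simp only: scaleR_diff_right)
      have "norm (eps *\<^sub>R (\<Sum>i<k. if J i = j then v j i else 0)) \<le> norm (eps *\<^sub>R SA) + norm (eps *\<^sub>R SB)"
        unfolding eq by (rule norm_triangle_ineq4)
      also have "\<dots> \<le> \<delta> / (4 * real p) + \<delta> / (4 * real p)" unfolding SA_def SB_def by (intro add_mono bnd)
      finally show ?thesis by simp
    qed
    have part2: "norm (eps *\<^sub>R (\<Sum>i<k. u i)) \<le> \<delta> / 2"
    proof -
      have "norm (eps *\<^sub>R (\<Sum>i<k. u i)) = norm (\<Sum>j<p. eps *\<^sub>R (\<Sum>i<k. if J i = j then v j i else 0))"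
        unfolding swap by (simp add: scaleR_sum_right)
      also have "\<dots> \<le> (\<Sum>j<p. \<delta> / (2 * real p))"
        using perj by (intro order_trans[OF norm_sum sum_mono]) auto
      also have "\<dots> = \<delta> / 2" using p0 by simp
      finally show ?thesis .
    qed
    have sumeq: "(\<Sum>i<k. f (Xc (real i * eps)) (y i) - fbar (Xc (real i * eps))) = (\<Sum>i<k. w i - u i) + (\<Sum>i<k. u i)"
      unfolding w_def by (simp add: sum_subtractf)
    have "norm (eps *\<^sub>R (\<Sum>i<k. f (Xc (real i * eps)) (y i) - fbar (Xc (real i * eps))))
        \<le> norm (eps *\<^sub>R (\<Sum>i<k. w i - u i)) + norm (eps *\<^sub>R (\<Sum>i<k. u i))"
      unfolding sumeq scaleR_add_right by (rule norm_triangle_ineq)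
    then show "norm (eps *\<^sub>R (\<Sum>i<k. f (Xc (real i * eps)) (y i) - fbar (Xc (real i * eps)))) \<le> \<delta>"
      using part1 part2 by simp
  qed
qed

end


lemma geom_sum_aux: "(\<Sum>i<k. c * (1 + c) ^ i) = (1 + c) ^ k - (1::real)"
  by (induction k) (simp_all add: algebra_simps)

lemma pow_le_exp: assumes "c \<ge> 0" shows "(1 + c) ^ k \<le> exp (real k * c)"
proof -
  have "(1 + c) ^ k \<le> exp c ^ k" using assms by (intro power_mono) auto
  also have "\<dots> = exp (real k * c)" by (simp add: exp_of_nat_mult)
  finally show ?thesis .
qed

context avg begin

lemma Xseq_sum: "Xseq f Y x eps \<omega> k = x + eps *\<^sub>R (\<Sum>i<k. f (Xseq f Y x eps \<omega> i) (Y (Suc i) \<omega>))"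
  by (induction k) (simp_all add: scaleR_add_right)

lemma Xc_sum:
  assumes "eps > 0" "real k * eps \<le> T"
  shows "norm (Xc (real k * eps) - x - eps *\<^sub>R (\<Sum>i<k. fbar (Xc (real i * eps)))) \<le> real k * eps * (L * (3 * B * eps))"
  using assms(2)
proof (induction k)
  case 0 then show ?case by (simp add: Xc0)
next
  case (Suc k)
  have kT: "real k * eps \<le> T" using Suc.prems assms(1) by (simp add: algebra_simps)
  have a: "norm (Xc (real (Suc k) * eps) - Xc (real k * eps) - eps *\<^sub>R fbar (Xc (real k * eps))) \<le> eps * (L * (3 * B * eps))"
    using Xc_lin[of "real k * eps" "real (Suc k) * eps"] Suc.prems assms(1) by (simp add: algebra_simps)
  have eq: "Xc (real (Suc k) * eps) - x - eps *\<^sub>R (\<Sum>i<Suc k. fbar (Xc (real i * eps))) =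
     (Xc (real k * eps) - x - eps *\<^sub>R (\<Sum>i<k. fbar (Xc (real i * eps)))) +
     (Xc (real (Suc k) * eps) - Xc (real k * eps) - eps *\<^sub>R fbar (Xc (real k * eps)))"
    by (simp add: scaleR_add_right algebra_simps)
  have "norm (Xc (real (Suc k) * eps) - x - eps *\<^sub>R (\<Sum>i<Suc k. fbar (Xc (real i * eps)))) \<le>
     real k * eps * (L * (3 * B * eps)) + eps * (L * (3 * B * eps))"
    unfolding eq by (rule order_trans[OF norm_triangle_ineq add_mono[OF Suc.IH[OF kT] a]])
  then show ?case by (simp add: algebra_simps)
qed


lemma deterministic:
  assumes ySY: "\<And>i. Y (Suc i) \<omega> \<in> SY"
    and AV: "\<forall>\<delta>>0. \<exists>e0>0. \<forall>eps. 0 < eps \<and> eps < e0 \<longrightarrow> (\<forall>k. real k * eps \<le> T \<longrightarrow>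
           norm (eps *\<^sub>R (\<Sum>i<k. f (Xc (real i * eps)) (Y (Suc i) \<omega>) - fbar (Xc (real i * eps)))) \<le> \<delta>)"
    and eta: "\<eta> > 0"
  shows "\<exists>e0>0. \<forall>eps. 0 < eps \<and> eps < e0 \<longrightarrow> (\<forall>t\<in>{0..T}. norm (Xpc f Y x eps \<omega> t - Xc t) \<le> \<eta>)"
proof -
  define E where "E = exp (L * T)"
  have E1: "E \<ge> 1" unfolding E_def using L_pos T_pos by simp
  define \<eta>1 where "\<eta>1 = min \<eta> 1"
  have \<eta>1: "\<eta>1 > 0" "\<eta>1 \<le> \<eta>" "\<eta>1 \<le> 1" using eta by (auto simp: \<eta>1_def)
  define \<delta> where "\<delta> = \<eta>1 / (3 * E)"
  have \<delta>0: "\<delta> > 0" using \<eta>1 E1 by (simp add: \<delta>_def)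
  from mp[OF spec[OF AV, of \<delta>] \<delta>0] obtain e1 where e1: "e1 > 0" and e1P': "\<forall>eps. 0 < eps \<and> eps < e1 \<longrightarrow> (\<forall>k. real k * eps \<le> T \<longrightarrow>
      norm (eps *\<^sub>R (\<Sum>i<k. f (Xc (real i * eps)) (Y (Suc i) \<omega>) - fbar (Xc (real i * eps)))) \<le> \<delta>)"
    by (elim exE conjE) (rule that)
  define e2 where "e2 = \<eta>1 / (9 * T * L * B * E)"
  define e3 where "e3 = \<eta> / (9 * B)"
  have e2: "e2 > 0" using \<eta>1 T_pos L_pos B_pos E1 by (simp add: e2_def)
  have e3: "e3 > 0" using eta B_pos by (simp add: e3_def)
  show ?thesis
  proof (intro exI[of _ "min e1 (min e2 e3)"] conjI allI impI ballI)
    show "0 < min e1 (min e2 e3)" using e1 e2 e3 by simp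
    fix eps t assume ep: "0 < eps \<and> eps < min e1 (min e2 e3)" and t: "t \<in> {0..T}"
    have eps0: "eps > 0" using ep by simp
    define X where "X k = Xseq f Y x eps \<omega> k" for k
    define \<rho> where "\<rho> = \<delta> + T * (L * (3 * B * eps))"
    have \<rho>E: "\<rho> * E \<le> 2 * \<eta>1 / 3"
    proof -
      have "\<delta> * E = \<eta>1 / 3" using E1 by (simp add: \<delta>_def)
      moreover have "T * (L * (3 * B * eps)) * E \<le> T * (L * (3 * B * e2)) * E"
        using ep T_pos L_pos B_pos E1 by (intro mult_right_mono mult_left_mono) auto
      moreover have "T * (L * (3 * B * e2)) * E = \<eta>1 / 3"
        using T_pos L_pos B_pos E1 by (simp add: e2_def field_simps)
      ultimately show ?thesis by (simp add: \<rho>_def algebra_simps)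
    qed
    have \<rho>0: "\<rho> \<ge> 0" using \<delta>0 T_pos L_pos B_pos eps0 by (simp add: \<rho>_def)
    have qE: "(1 + eps * L) ^ k \<le> E" if "real k * eps \<le> T" for k
    proof -
      have "(1 + eps * L) ^ k \<le> exp (real k * (eps * L))" using eps0 L_pos by (intro pow_le_exp) auto
      also have "\<dots> \<le> E" unfolding E_def using that L_pos by (simp add: algebra_simps)
      finally show ?thesis .
    qed
    have main: "real k * eps \<le> T \<longrightarrow> norm (X k - Xc (real k * eps)) \<le> \<rho> * (1 + eps * L) ^ k" for k
    proof (induction k rule: less_induct)
      case (less k)
      show ?case
      proof
        assume kT: "real k * eps \<le> T"
        have iT: "real i * eps \<le> T" if "i < k" for i
        proof -
          have "real i * eps \<le> real k * eps" using that eps0 by (intro mult_right_mono) auto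
          then show ?thesis using kT by linarith
        qed
        have ei: "norm (X i - Xc (real i * eps)) \<le> \<rho> * (1 + eps * L) ^ i" if "i < k" for i
          using less.IH[OF that] iT[OF that] by blast
        have XD: "X i \<in> D" "Xc (real i * eps) \<in> D" if "i < k" for i
        proof -
          have "\<rho> * (1 + eps * L) ^ i \<le> \<rho> * E" using qE[OF iT[OF that]] \<rho>0 by (intro mult_left_mono) auto
          then have "norm (X i - Xc (real i * eps)) \<le> 1" using ei[OF that] \<rho>E \<eta>1 by linarith
          then have "X i \<in> cball (Xc (real i * eps)) 1" by (simp add: dist_norm norm_minus_commute)
          then show "X i \<in> D" using nbhd[of "real i * eps"] iT[OF that] eps0 by auto
          show "Xc (real i * eps) \<in> D" using XcD[of "real i * eps"] iT[OF that] eps0 by auto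
        qed
        define S1 where "S1 = (\<Sum>i<k. f (X i) (Y (Suc i) \<omega>))"
        define S2 where "S2 = (\<Sum>i<k. f (Xc (real i * eps)) (Y (Suc i) \<omega>))"
        define S3 where "S3 = (\<Sum>i<k. fbar (Xc (real i * eps)))"
        have Xk: "X k = x + eps *\<^sub>R S1" unfolding X_def S1_def by (rule Xseq_sum)
        have d12: "(\<Sum>i<k. f (X i) (Y (Suc i) \<omega>) - f (Xc (real i * eps)) (Y (Suc i) \<omega>)) = S1 - S2"
          unfolding S1_def S2_def by (rule sum_subtractf)
        have d23: "(\<Sum>i<k. f (Xc (real i * eps)) (Y (Suc i) \<omega>) - fbar (Xc (real i * eps))) = S2 - S3"
          unfolding S2_def S3_def by (rule sum_subtractf)
        have decomp: "X k - Xc (real k * eps) = eps *\<^sub>R (S1 - S2) + eps *\<^sub>R (S2 - S3) - (Xc (real k * eps) - x - eps *\<^sub>R S3)"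
          unfolding Xk by (simp add: algebra_simps)
        have t1: "norm (eps *\<^sub>R (S1 - S2)) \<le> \<rho> * ((1 + eps * L) ^ k - 1)"
        proof -
          have "norm (eps *\<^sub>R (S1 - S2)) = eps * norm (\<Sum>i<k. f (X i) (Y (Suc i) \<omega>) - f (Xc (real i * eps)) (Y (Suc i) \<omega>))"
            using eps0 d12 by simp
          also have "\<dots> \<le> eps * (\<Sum>i<k. L * (\<rho> * (1 + eps * L) ^ i))"
          proof (intro mult_left_mono order_trans[OF norm_sum sum_mono])
            fix i assume "i \<in> {..<k}"
            then have ik: "i < k" by simp
            have "norm (f (X i) (Y (Suc i) \<omega>) - f (Xc (real i * eps)) (Y (Suc i) \<omega>)) \<le> L * norm (X i - Xc (real i * eps))"
              using XD[OF ik] ySY by (intro lipf) auto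
            also have "\<dots> \<le> L * (\<rho> * (1 + eps * L) ^ i)" using ei[OF ik] L_pos by (intro mult_left_mono) auto
            finally show "norm (f (X i) (Y (Suc i) \<omega>) - f (Xc (real i * eps)) (Y (Suc i) \<omega>)) \<le> L * (\<rho> * (1 + eps * L) ^ i)" .
          qed (use eps0 in auto)
          also have "\<dots> = \<rho> * (\<Sum>i<k. (eps * L) * (1 + eps * L) ^ i)"
            by (simp add: sum_distrib_left algebra_simps)
          also have "\<dots> = \<rho> * ((1 + eps * L) ^ k - 1)" by (simp only: geom_sum_aux)
          finally show ?thesis .
        qed
        have t2: "norm (eps *\<^sub>R (S2 - S3)) \<le> \<delta>"
        proof -
          have "0 < eps \<and> eps < e1" using ep by simp
          then have "norm (eps *\<^sub>R (\<Sum>i<k. f (Xc (real i * eps)) (Y (Suc i) \<omega>) - fbar (Xc (real i * eps)))) \<le> \<delta>"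
            using e1P' kT by blast
          then show ?thesis unfolding d23 .
        qed
        have t3: "norm (Xc (real k * eps) - x - eps *\<^sub>R S3) \<le> T * (L * (3 * B * eps))"
        proof -
          have "norm (Xc (real k * eps) - x - eps *\<^sub>R S3) \<le> real k * eps * (L * (3 * B * eps))"
            unfolding S3_def by (rule Xc_sum[OF eps0 kT])
          also have "\<dots> \<le> T * (L * (3 * B * eps))" using kT L_pos B_pos eps0 by (intro mult_right_mono) auto
          finally show ?thesis .
        qed
        have "norm (X k - Xc (real k * eps)) \<le> norm (eps *\<^sub>R (S1 - S2)) + norm (eps *\<^sub>R (S2 - S3)) + norm (Xc (real k * eps) - x - eps *\<^sub>R S3)"
          unfolding decomp by (rule order_trans[OF norm_triangle_ineq4 add_right_mono[OF norm_triangle_ineq]])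
        also have "\<dots> \<le> \<rho> * ((1 + eps * L) ^ k - 1) + \<delta> + T * (L * (3 * B * eps))"
          using t1 t2 t3 by linarith
        also have "\<dots> = \<rho> * (1 + eps * L) ^ k" by (simp add: \<rho>_def algebra_simps)
        finally show "norm (X k - Xc (real k * eps)) \<le> \<rho> * (1 + eps * L) ^ k" .
      qed
    qed
    define k where "k = nat \<lfloor>t / eps\<rfloor>"
    have t0: "0 \<le> t" "t \<le> T" using t by auto
    have kr: "real k = of_int \<lfloor>t / eps\<rfloor>" unfolding k_def using t0 eps0 by simp
    have "real k \<le> t / eps" "t / eps < real k + 1" using kr by linarith+
    then have kt: "real k * eps \<le> t" "t - real k * eps \<le> eps" using eps0 by (simp_all add: field_simps)
    have kT: "real k * eps \<le> T" using kt t0 by linarith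
    have k0: "0 \<le> real k * eps" using eps0 by simp
    have Xpc: "Xpc f Y x eps \<omega> t = X k" unfolding Xpc_def X_def k_def ..
    have n1: "norm (X k - Xc (real k * eps)) \<le> 2 * \<eta>1 / 3"
    proof -
      have "norm (X k - Xc (real k * eps)) \<le> \<rho> * (1 + eps * L) ^ k" using main kT by blast
      also have "\<dots> \<le> \<rho> * E" using qE[OF kT] \<rho>0 by (intro mult_left_mono) auto
      finally show ?thesis using \<rho>E by linarith
    qed
    have n2: "norm (Xc (real k * eps) - Xc t) \<le> \<eta> / 3"
    proof -
      have "norm (Xc (real k * eps) - Xc t) \<le> 3 * B * \<bar>real k * eps - t\<bar>"
        using Xc_lip[of t "real k * eps"] t0 kT k0 by simp
      also have "\<dots> \<le> 3 * B * eps" using kt B_pos by (intro mult_left_mono) auto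
      also have "\<dots> \<le> 3 * B * e3" using ep B_pos by (intro mult_left_mono) auto
      also have "\<dots> = \<eta> / 3" using B_pos by (simp add: e3_def)
      finally show ?thesis .
    qed
    have "norm (Xpc f Y x eps \<omega> t - Xc t) \<le> norm (X k - Xc (real k * eps)) + norm (Xc (real k * eps) - Xc t)"
      unfolding Xpc using norm_triangle_ineq[of "X k - Xc (real k * eps)" "Xc (real k * eps) - Xc t"] by simp
    then show "norm (Xpc f Y x eps \<omega> t - Xc t) \<le> \<eta>" using n1 n2 \<eta>1 by linarith
  qed
qed

end

theorem lemma1:
  fixes M :: "'w measure"
    and f :: "'n::euclidean_space \<Rightarrow> 'm::euclidean_space \<Rightarrow> 'n"
    and Y :: "nat \<Rightarrow> 'w \<Rightarrow> 'm"
    and SY :: "'m set"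
    and \<mu> :: "'m measure"
    and fbar :: "'n \<Rightarrow> 'n"
    and x :: 'n
    and Xc :: "real \<Rightarrow> 'n"
  assumes prob: "prob_space M"
    and compl: "complete_measure M"
    and Y_rv: "\<And>k. Y k \<in> borel_measurable M"
    and Y_SY: "\<And>k \<omega>. \<omega> \<in> space M \<Longrightarrow> Y k \<omega> \<in> SY"
    \<comment> \<open>(A1)\<close>
    and A1_cont: "continuous_on UNIV (\<lambda>(x, y). f x y)"
    and A1_bdd: "\<And>x. bounded (range (f x))"
    and A1_lip: "\<And>D. compact D \<Longrightarrow> \<exists>k. \<forall>x1\<in>D. \<forall>x2\<in>D. \<forall>y\<in>SY.
                   norm (f x1 y - f x2 y) \<le> k * norm (x1 - x2)"
    \<comment> \<open>(A2)\<close>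
    and mu_prob: "prob_space \<mu>"
    and mu_sets: "sets \<mu> = sets borel"
    and SY_meas: "SY \<in> sets \<mu>"
    and mu_SY: "emeasure \<mu> SY = 1"
    and fbar_def: "\<And>x. fbar x = (LINT y:SY|\<mu>. f x y)"
    and A2_erg: "\<And>x. AE \<omega> in M.
          (\<lambda>N. (1 / real (N + 1)) *\<^sub>R (\<Sum>k\<le>N. f x (Y (Suc k) \<omega>))) \<longlonglongrightarrow> fbar x"
    \<comment> \<open>(A3): Xc solves the continuous average system on [0, infinity)\<close>
    and Xc_0: "Xc 0 = x"
    and Xc_ode: "\<And>t. t \<ge> 0 \<Longrightarrow> (Xc has_vector_derivative fbar (Xc t)) (at t within {0..})"
  shows "\<forall>T>0. AE \<omega> in M.
           ((\<lambda>eps. SUP t\<in>{0..T}. norm (Xpc f Y x eps \<omega> t - Xc t)) \<longlongrightarrow> 0) (at_right 0)"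
proof (intro allI impI)
  fix T :: real assume T: "T > 0"
  have contXc: "continuous_on {0..T} Xc"
    unfolding continuous_on_eq_continuous_within
  proof
    fix t assume t: "t \<in> {0..T}"
    have "(Xc has_vector_derivative fbar (Xc t)) (at t within {0..T})"
      using Xc_ode[of t] t by (auto intro: has_vector_derivative_within_subset)
    then show "continuous (at t within {0..T}) Xc" by (rule has_vector_derivative_continuous)
  qed
  define K where "K = Xc ` {0..T}"
  have cK: "compact K" unfolding K_def by (rule compact_continuous_image[OF contXc compact_Icc])
  define D where "D = {a + b | a b. a \<in> K \<and> b \<in> cball (0::'n) 1}"
  have cD: "compact D" unfolding D_def by (rule compact_sums[OF cK compact_cball])
  have nbhd: "cball (Xc s) 1 \<subseteq> D" if s: "0 \<le> s" "s \<le> T" for s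
  proof
    fix z assume z: "z \<in> cball (Xc s) 1"
    have "z - Xc s \<in> cball 0 1" using z by (simp add: dist_norm norm_minus_commute)
    moreover have "Xc s \<in> K" unfolding K_def using s by auto
    moreover have "z = Xc s + (z - Xc s)" by simp
    ultimately show "z \<in> D" unfolding D_def by blast
  qed
  obtain k0 where k0: "\<forall>x1\<in>D. \<forall>x2\<in>D. \<forall>y\<in>SY. norm (f x1 y - f x2 y) \<le> k0 * norm (x1 - x2)"
    using A1_lip[OF cD] by blast
  define L where "L = \<bar>k0\<bar> + 1"
  have Lpos: "L > 0" unfolding L_def by simp
  have lipf: "norm (f a y - f b y) \<le> L * norm (a - b)" if "a \<in> D" "b \<in> D" "y \<in> SY" for a b y
  proof -
    have "norm (f a y - f b y) \<le> k0 * norm (a - b)" using k0 that by blast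
    also have "\<dots> \<le> L * norm (a - b)" unfolding L_def by (intro mult_right_mono) auto
    finally show ?thesis .
  qed
  obtain B0 where B0: "\<forall>v\<in>range (f x). norm v \<le> B0" using A1_bdd[of x] unfolding bounded_iff by blast
  obtain R where R: "\<forall>z\<in>D. norm z \<le> R" using compact_imp_bounded[OF cD] unfolding bounded_iff by blast
  have xD: "x \<in> D" using nbhd[of 0] T Xc_0 by auto
  define B where "B = \<bar>B0\<bar> + L * (R + norm x) + 1"
  have Bpos: "B > 0"
  proof -
    have "norm x \<le> R" using R xD by blast
    then have "0 \<le> R + norm x" using norm_ge_zero[of x] by linarith
    then show ?thesis unfolding B_def using Lpos by (simp add: add_nonneg_pos)
  qed
  have bf: "norm (f a y) \<le> B" if "a \<in> D" "y \<in> SY" for a y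
  proof -
    have "norm (f a y) \<le> norm (f x y) + norm (f a y - f x y)" using norm_triangle_ineq[of "f x y" "f a y - f x y"] by simp
    also have "\<dots> \<le> B0 + L * norm (a - x)" using B0 lipf[OF that(1) xD that(2)] by (intro add_mono) auto
    also have "\<dots> \<le> \<bar>B0\<bar> + L * (R + norm x)"
    proof -
      have "norm (a - x) \<le> norm a + norm x" by (rule norm_triangle_ineq4)
      also have "\<dots> \<le> R + norm x" using R that(1) by simp
      finally show ?thesis using Lpos by (intro add_mono mult_left_mono) auto
    qed
    finally show ?thesis unfolding B_def by simp
  qed
  have bfbar: "norm (fbar a) \<le> B" if "a \<in> D" for a
    by (rule fbar_props(1)[OF mu_prob mu_sets SY_meas mu_SY fbar_def A1_cont A1_bdd]) (rule bf[OF that])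
  have lipfbar: "norm (fbar a - fbar b) \<le> L * norm (a - b)" if "a \<in> D" "b \<in> D" for a b
    by (rule fbar_props(2)[OF mu_prob mu_sets SY_meas mu_SY fbar_def A1_cont A1_bdd]) (rule lipf[OF that])
  have loc: "avg f fbar Xc SY D T L B x"
    by (rule avg.intro[OF T Lpos Bpos lipf lipfbar bfbar nbhd Xc_ode Xc_0])
  define Z where "Z = (\<lambda>(j, p). Xc (real j * T / real p)) ` (UNIV :: (nat \<times> nat) set)"
  have cZ: "countable Z" unfolding Z_def by simp
  have aeZ: "AE \<omega> in M. \<forall>z\<in>Z. (\<lambda>N. (1 / real (N + 1)) *\<^sub>R (\<Sum>k\<le>N. f z (Y (Suc k) \<omega>))) \<longlonglongrightarrow> fbar z"
    by (rule AE_ball_countable'[OF _ cZ]) (rule A2_erg)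
  have aeS: "AE \<omega> in M. \<forall>i. Y (Suc i) \<omega> \<in> SY"
    using AE_space by (rule eventually_mono) (auto intro: Y_SY)
  show "AE \<omega> in M. ((\<lambda>eps. SUP t\<in>{0..T}. norm (Xpc f Y x eps \<omega> t - Xc t)) \<longlongrightarrow> 0) (at_right 0)"
    using aeZ aeS
  proof eventually_elim
    case (elim \<omega>)
    have erg: "(\<lambda>N. (1 / real (N + 1)) *\<^sub>R (\<Sum>k\<le>N. f (Xc (real j * T / real p)) (Y (Suc k) \<omega>))) \<longlonglongrightarrow> fbar (Xc (real j * T / real p))"
      for p j :: nat
    proof -
      have "Xc (real j * T / real p) \<in> Z" unfolding Z_def by (rule image_eqI[of _ _ "(j, p)"]) auto
      then show ?thesis using elim(1) by blast
    qed
    have ySY: "\<And>i. Y (Suc i) \<omega> \<in> SY" using elim(2) by blast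
    have AV: "\<forall>\<delta>>0. \<exists>e0>0. \<forall>eps. 0 < eps \<and> eps < e0 \<longrightarrow> (\<forall>k. real k * eps \<le> T \<longrightarrow>
           norm (eps *\<^sub>R (\<Sum>i<k. f (Xc (real i * eps)) (Y (Suc i) \<omega>) - fbar (Xc (real i * eps)))) \<le> \<delta>)"
    proof (intro allI impI)
      fix \<delta> :: real assume d: "\<delta> > 0"
      show "\<exists>e0>0. \<forall>eps. 0 < eps \<and> eps < e0 \<longrightarrow> (\<forall>k. real k * eps \<le> T \<longrightarrow>
           norm (eps *\<^sub>R (\<Sum>i<k. f (Xc (real i * eps)) (Y (Suc i) \<omega>) - fbar (Xc (real i * eps)))) \<le> \<delta>)"
        by (rule avg.averaging[OF loc, where y="\<lambda>i. Y (Suc i) \<omega>", OF ySY erg d])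
    qed
    show ?case unfolding tendsto_iff
    proof (intro allI impI)
      fix \<eta> :: real assume eta: "\<eta> > 0"
      obtain e0 where e0: "e0 > 0" and e0P: "\<forall>eps. 0 < eps \<and> eps < e0 \<longrightarrow> (\<forall>t\<in>{0..T}. norm (Xpc f Y x eps \<omega> t - Xc t) \<le> \<eta> / 2)"
        using avg.deterministic[OF loc, of Y \<omega> "\<eta> / 2", OF ySY AV] eta by auto
      show "\<forall>\<^sub>F eps in at_right 0. dist (SUP t\<in>{0..T}. norm (Xpc f Y x eps \<omega> t - Xc t)) 0 < \<eta>"
        unfolding eventually_at_right_field
      proof (intro exI[of _ e0] conjI allI impI e0)
        fix eps :: real assume ep: "0 < eps" "eps < e0"
        have bnd: "norm (Xpc f Y x eps \<omega> t - Xc t) \<le> \<eta> / 2" if "t \<in> {0..T}" for t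
          using e0P ep that by blast
        have ne: "{0..T} \<noteq> {}" using T by simp
        have up: "(SUP t\<in>{0..T}. norm (Xpc f Y x eps \<omega> t - Xc t)) \<le> \<eta> / 2"
          by (rule cSUP_least[OF ne bnd])
        have bdd: "bdd_above ((\<lambda>t. norm (Xpc f Y x eps \<omega> t - Xc t)) ` {0..T})"
          by (rule bdd_aboveI2[of _ _ "\<eta> / 2"]) (rule bnd)
        have lo: "0 \<le> (SUP t\<in>{0..T}. norm (Xpc f Y x eps \<omega> t - Xc t))"
          by (rule cSUP_upper2[OF bdd, of 0]) (use T in auto)
        show "dist (SUP t\<in>{0..T}. norm (Xpc f Y x eps \<omega> t - Xc t)) 0 < \<eta>"
          using up lo eta by (simp add: dist_real_def)
      qed
    qed
  qed
qed

end
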